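(* Let $G$ be a discrete group. Every proper weight function $\ell$ on $G$ is a slow conditionally negative type function.
   Context: A weight on $G$ is a conditionally negative type function $\ell:G\to[0,\infty)$ (symmetric, $\ell(e)=0$, strictly positive away from $e$) satisfying $\ell(st)\le\ell(s)+\ell(t)$ for all $s,t\in G$. It is proper if $\{g:\ell(g)\le m\}$ is finite for every $m$. A conditionally negative type function is slow if it is proper and for every fixed $g\in G$, $\ell(g^{-1}g')=\ell(g')+o(\ell(g')^{1/2})$ as $g'\to\infty$ (i.e. leaves every finite set). *)

theory Defs
  imports Complex_Main "HOL-Library.Landau_Symbols"
begin

text \<open>Groups are modelled by the type class group_add (not necessarily
commutative); the group law is written +, the identity 0, inverse uminus.
So g^{-1} g' is written -g + g'.\<close>

definition cond_neg_type :: "('a::group_add \<Rightarrow> real) \<Rightarrow> bool" where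
  "cond_neg_type \<psi> \<longleftrightarrow>
     \<psi> 0 = 0 \<and> (\<forall>g. \<psi> (- g) = \<psi> g) \<and>
     (\<forall>(n::nat) (x::nat \<Rightarrow> 'a) (c::nat \<Rightarrow> real).
        (\<Sum>i<n. c i) = 0 \<longrightarrow>
        (\<Sum>i<n. \<Sum>j<n. c i * c j * \<psi> (- x j + x i)) \<le> 0)"

definition is_weight :: "('a::group_add \<Rightarrow> real) \<Rightarrow> bool" where
  "is_weight l \<longleftrightarrow>
     cond_neg_type l \<and> (\<forall>g. l g \<ge> 0) \<and> (\<forall>g. g \<noteq> 0 \<longrightarrow> l g > 0) \<and>
     (\<forall>s t. l (s + t) \<le> l s + l t)"

definition proper_fun :: "('a \<Rightarrow> real) \<Rightarrow> bool" where
  "proper_fun l \<longleftrightarrow> (\<forall>m. finite {g. l g \<le> m})"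

text \<open>g' \<rightarrow> \<infinity> (leaving every finite set) is the cofinite filter.\<close>
definition slow_cnt :: "('a::group_add \<Rightarrow> real) \<Rightarrow> bool" where
  "slow_cnt l \<longleftrightarrow>
     cond_neg_type l \<and> proper_fun l \<and>
     (\<forall>g. (\<lambda>g'. l (- g + g') - l g') \<in> o[cofinite](\<lambda>g'. sqrt (l g')))"

end

theory Submission
  imports Defs
begin

theorem lemma5p5:
  fixes l :: "'a::group_add \<Rightarrow> real"
  assumes "is_weight l" and "proper_fun l"
  shows "slow_cnt l"
proof -
  have cnt: "cond_neg_type l" and nn: "\<And>g. l g \<ge> 0"
    and sub: "\<And>s t. l (s + t) \<le> l s + l t"
    using assms(1) unfolding is_weight_def by auto
  have sym: "\<And>g. l (- g) = l g" using cnt unfolding cond_neg_type_def by auto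
  have ev: "\<forall>\<^sub>F x in cofinite. l x > M" for M
  proof -
    have "finite {x. l x \<le> M}" using assms(2) unfolding proper_fun_def by auto
    then show ?thesis unfolding eventually_cofinite by (simp add: not_less)
  qed
  have bound: "\<bar>l (- g + g') - l g'\<bar> \<le> l g" for g g'
  proof -
    have "l (- g + g') \<le> l g + l g'" using sub[of "-g" g'] sym[of g] by simp
    moreover have "l g' \<le> l g + l (- g + g')"
      using sub[of g "- g + g'"] by (simp add: add.assoc[symmetric])
    ultimately show ?thesis by linarith
  qed
  have "(\<lambda>g'. l (- g + g') - l g') \<in> o[cofinite](\<lambda>g'. sqrt (l g'))" for g
  proof (rule landau_o.smallI)
    fix c :: real assume c: "c > 0"
    show "\<forall>\<^sub>F x in cofinite. norm (l (- g + x) - l x) \<le> c * norm (sqrt (l x))"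
      using ev[of "(l g / c)^2"]
    proof eventually_elim
      case (elim x)
      have "l g / c \<ge> 0" using nn[of g] c by simp
      hence "l g / c \<le> sqrt (l x)"
        using elim real_le_rsqrt by (simp add: less_imp_le)
      hence "l g \<le> c * sqrt (l x)" using c by (simp add: field_simps)
      thus ?case using bound[of g x] nn[of x] by simp
    qed
  qed
  thus ?thesis unfolding slow_cnt_def using cnt assms(2) by auto
qed

end
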